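(* Let $\Sigma$ be a $(\lambda,\beta)$-set system on a finite set $V$. For every $S\in\Sigma$ with $|S|\ge 1/(\lambda-\lambda^2)$ and every $t\in S$, there exists a $t$-bound set $S'\in\Sigma$ with $\lambda^2|S|\le|S'|\le\lambda|S|$.
   Context: A set containing vertex $t$ is called $t$-bound. For $0<\lambda<1$, $\beta>1$, a collection $\Sigma$ of subsets of a finite set $V$ is a $(\lambda,\beta)$-set system if: (K1) $V\in\Sigma$; (K2) if $S\in\Sigma$ has $|S|>1$, then for every $t\in S$ there is a $t$-bound $S'\in\Sigma$ with $S'\subset S$ and $|S'|\ge\min\{\lambda|S|,|S|-1\}$; (K3) for every $v\in V$ and $L\ge2$, the union of all sets in $\Sigma$ containing $v$ of size at most $L$ has at most $\beta L$ elements. *)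

theory Defs
  imports Complex_Main
begin

definition bound :: "'a \<Rightarrow> 'a set \<Rightarrow> bool" where
  "bound t S \<longleftrightarrow> t \<in> S"

definition lb_set_system :: "real \<Rightarrow> real \<Rightarrow> 'a set \<Rightarrow> 'a set set \<Rightarrow> bool" where
  "lb_set_system lam bet V \<Sigma> \<longleftrightarrow>
     0 < lam \<and> lam < 1 \<and> bet > 1 \<and> finite V \<and> \<Sigma> \<subseteq> Pow V \<and>
     V \<in> \<Sigma> \<and>
     (\<forall>S\<in>\<Sigma>. card S > 1 \<longrightarrow>
        (\<forall>t\<in>S. \<exists>S'\<in>\<Sigma>. bound t S' \<and> S' \<subset> S \<and>
             real (card S') \<ge> min (lam * real (card S)) (real (card S) - 1))) \<and>
     (\<forall>v\<in>V. \<forall>L::real. L \<ge> 2 \<longrightarrow>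
        real (card (\<Union>{S\<in>\<Sigma>. v \<in> S \<and> real (card S) \<le> L})) \<le> bet * L)"

end

theory Submission
  imports Defs
begin

theorem proposition5:
  fixes lam bet :: real and V :: "'a set" and \<Sigma> :: "'a set set"
  assumes "lb_set_system lam bet V \<Sigma>"
    and "S \<in> \<Sigma>" and "real (card S) \<ge> 1 / (lam - lam^2)" and "t \<in> S"
  shows "\<exists>S'\<in>\<Sigma>. bound t S' \<and> lam^2 * real (card S) \<le> real (card S')
                 \<and> real (card S') \<le> lam * real (card S)"
proof -
  define n where "n = real (card S)"
  have l0: "0 < lam" and l1: "lam < 1" and fin: "finite V" and sub: "\<Sigma> \<subseteq> Pow V"
    and K2: "\<forall>S\<in>\<Sigma>. card S > 1 \<longrightarrow>
        (\<forall>t\<in>S. \<exists>S'\<in>\<Sigma>. bound t S' \<and> S' \<subset> S \<and>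
             real (card S') \<ge> min (lam * real (card S)) (real (card S) - 1))"
    using assms(1) unfolding lb_set_system_def by auto
  have pos: "lam - lam^2 > 0" using l0 l1 by (simp add: power2_eq_square algebra_simps)
  have nge: "n * (lam - lam^2) \<ge> 1" using assms(3) pos unfolding n_def
    by (simp add: divide_le_eq)
  have npos: "n > 0"
  proof (rule ccontr)
    assume "\<not> n > 0" hence "n * (lam - lam^2) \<le> 0" using pos by (simp add: mult_nonpos_nonneg)
    thus False using nge by linarith
  qed
  have lamn: "lam * n > 1"
  proof -
    have e: "lam * n - n * (lam - lam^2) = lam^2 * n" by (simp add: algebra_simps)
    have "lam^2 * n > 0" using l0 npos by simp
    thus ?thesis using e nge by linarith
  qed
  have main: "\<And>m. \<forall>T. card T = m \<longrightarrow> T \<in> \<Sigma> \<longrightarrow> t \<in> T \<longrightarrow> lam * n < real (card T) \<longrightarrow>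
     (\<exists>S'\<in>\<Sigma>. bound t S' \<and> lam^2 * n \<le> real (card S') \<and> real (card S') \<le> lam * n)"
  proof -
    fix m
    show "?thesis m"
    proof (induction m rule: less_induct)
      case (less m)
      show ?case
      proof (intro allI impI)
        fix T assume cT: "card T = m" and TS: "T \<in> \<Sigma>" and tT: "t \<in> T" and gt: "lam * n < real (card T)"
        have "card T > 1" using gt lamn by linarith
        then obtain T' where T': "T' \<in> \<Sigma>" "bound t T'" "T' \<subset> T"
          "real (card T') \<ge> min (lam * real (card T)) (real (card T) - 1)"
          using K2 TS tT by blast
        have finT: "finite T" using TS sub fin by (meson PowD finite_subset subsetD)
        have lt: "card T' < card T" using T'(3) finT by (simp add: psubset_card_mono)
        show "\<exists>S'\<in>\<Sigma>. bound t S' \<and> lam^2 * n \<le> real (card S') \<and> real (card S') \<le> lam * n"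
        proof (cases "real (card T') \<le> lam * n")
          case True
          have a: "lam * real (card T) \<ge> lam^2 * n" using gt l0
            by (simp add: power2_eq_square mult.assoc)
          have b: "real (card T) - 1 \<ge> lam^2 * n"
          proof -
            have "lam^2 * n = lam * n - n * (lam - lam^2)" by (simp add: algebra_simps)
            thus ?thesis using nge gt by linarith
          qed
          show ?thesis using T' True a b by (intro bexI[of _ T']) auto
        next
          case False
          thus ?thesis using less.IH[of "card T'"] lt cT T' unfolding bound_def by auto
        qed
      qed
    qed
  qed
  have "lam * n < n" using l1 npos by simp
  thus ?thesis using main[of "card S"] assms(2,4) unfolding n_def by auto
qed

end
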